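(* Fix $\beta>0$ and $h\in\mathbb{R}$, and suppose there is a number $q$ and a constant $C_0$ depending only on $\beta,h$ such that for every $N$, $$\mathbb{E}\langle (R_{12}-q)^4\rangle \le \frac{C_0}{N^2}.$$ Let $v_1,\dots,v_N,w_1,\dots,w_N$ be arbitrary (real-valued) functions of $g$ and $\sigma$. Then, with a constant $C(\beta,h)$ depending only on $\beta,h$ (and the constants in the hypothesis), $$\mathbb{E}\Bigl(\frac{1}{N^2}\sum_{j,k=1}^N\langle\dot\sigma_jv_k\rangle\langle w_k\sigma_j\rangle\Bigr) \le \frac{C(\beta,h)}{N^{3/2}}\sum_{k=1}^N\bigl(\mathbb{E}\langle v_k^2\rangle\langle w_k^2\rangle\bigr)^{1/2}.$$
   Context: Sherrington–Kirkpatrick model: for a positive integer $N$, let $\Sigma_N=\{-1,1\}^N$ and let $g=(g_{ij})_{1\le i<j\le N}$ be i.i.d. standard Gaussian random variables (the disorder). Given $g$, the Gibbs measure on $\Sigma_N$ is $G_N(\sigma)=Z_N^{-1}\exp\bigl(\frac{\beta}{\sqrt N}\sum_{1\le i<j\le N} g_{ij}\sigma_i\sigma_j + h\sum_{i=1}^N\sigma_i\bigr)$, with $Z_N$ the normalizing constant. Replicas $\sigma^1,\sigma^2,\dots$ are independent samples from $G_N$ given $g$, and for a function $f$ of $g$ and replicas, $\langle f\rangle$ denotes the quenched average (expectation over replicas with $g$ fixed); in $\langle\dot\sigma_jv_k\rangle$ the functions are evaluated at the same configuration $\sigma$. $\mathbb{E}$ is expectation over the disorder. The overlap is $R_{12}=\frac1N\sum_{i=1}^N\sigma^1_i\sigma^2_i$.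 For each $j$, $\dot\sigma_j := \sigma_j - \langle\sigma_j\rangle$. *)

theory Defs
  imports "HOL-Probability.Probability"
begin

text \<open>Sites are indexed by 0..<N. A configuration is a function nat => real with
  values +1/-1 on 0..<N and 0 elsewhere. The disorder g is indexed by pairs (i,j), i<j<N.\<close>

definition spins :: "nat \<Rightarrow> (nat \<Rightarrow> real) set" where
  "spins N = {\<sigma>. (\<forall>i<N. \<sigma> i = 1 \<or> \<sigma> i = -1) \<and> (\<forall>i. N \<le> i \<longrightarrow> \<sigma> i = 0)}"

definition pairs :: "nat \<Rightarrow> (nat \<times> nat) set" where
  "pairs N = {(i, j). i < j \<and> j < N}"

definition disorder :: "nat \<Rightarrow> (nat \<times> nat \<Rightarrow> real) measure" where
  "disorder N = PiM (pairs N) (\<lambda>_. std_normal_distribution)"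

definition hamil :: "real \<Rightarrow> real \<Rightarrow> nat \<Rightarrow> (nat \<times> nat \<Rightarrow> real) \<Rightarrow> (nat \<Rightarrow> real) \<Rightarrow> real" where
  "hamil \<beta> h N g \<sigma> =
     \<beta> / sqrt (real N) * (\<Sum>(i, j)\<in>pairs N. g (i, j) * \<sigma> i * \<sigma> j) + h * (\<Sum>i<N. \<sigma> i)"

definition partition_fn :: "real \<Rightarrow> real \<Rightarrow> nat \<Rightarrow> (nat \<times> nat \<Rightarrow> real) \<Rightarrow> real" where
  "partition_fn \<beta> h N g = (\<Sum>\<sigma>\<in>spins N. exp (hamil \<beta> h N g \<sigma>))"

definition gibbs :: "real \<Rightarrow> real \<Rightarrow> nat \<Rightarrow> (nat \<times> nat \<Rightarrow> real) \<Rightarrow> (nat \<Rightarrow> real) \<Rightarrow> real" where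
  "gibbs \<beta> h N g \<sigma> = exp (hamil \<beta> h N g \<sigma>) / partition_fn \<beta> h N g"

definition gavg :: "real \<Rightarrow> real \<Rightarrow> nat \<Rightarrow> (nat \<times> nat \<Rightarrow> real) \<Rightarrow> ((nat \<Rightarrow> real) \<Rightarrow> real) \<Rightarrow> real" where
  "gavg \<beta> h N g f = (\<Sum>\<sigma>\<in>spins N. f \<sigma> * gibbs \<beta> h N g \<sigma>)"

definition gavg2 :: "real \<Rightarrow> real \<Rightarrow> nat \<Rightarrow> (nat \<times> nat \<Rightarrow> real)
    \<Rightarrow> ((nat \<Rightarrow> real) \<Rightarrow> (nat \<Rightarrow> real) \<Rightarrow> real) \<Rightarrow> real" where
  "gavg2 \<beta> h N g f =
     (\<Sum>\<sigma>1\<in>spins N. \<Sum>\<sigma>2\<in>spins N. f \<sigma>1 \<sigma>2 * gibbs \<beta> h N g \<sigma>1 * gibbs \<beta> h N g \<sigma>2)"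

definition overlap :: "nat \<Rightarrow> (nat \<Rightarrow> real) \<Rightarrow> (nat \<Rightarrow> real) \<Rightarrow> real" where
  "overlap N \<sigma>1 \<sigma>2 = (\<Sum>i<N. \<sigma>1 i * \<sigma>2 i) / real N"

definition sdot :: "real \<Rightarrow> real \<Rightarrow> nat \<Rightarrow> (nat \<times> nat \<Rightarrow> real) \<Rightarrow> nat \<Rightarrow> (nat \<Rightarrow> real) \<Rightarrow> real" where
  "sdot \<beta> h N g j \<sigma> = \<sigma> j - gavg \<beta> h N g (\<lambda>\<tau>. \<tau> j)"

end

theory Submission
  imports Defs
begin

lemma wcs:
  fixes p a b :: "'a \<Rightarrow> real"
  assumes "finite S" "\<forall>x\<in>S. p x \<ge> 0"
  shows "(\<Sum>x\<in>S. p x * a x * b x)\<^sup>2 \<le> (\<Sum>x\<in>S. p x * (a x)\<^sup>2) * (\<Sum>x\<in>S. p x * (b x)\<^sup>2)"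
proof -
  have "(\<Sum>x\<in>S. (sqrt (p x) * a x) * (sqrt (p x) * b x))\<^sup>2 \<le> (\<Sum>x\<in>S. (sqrt (p x) * a x)\<^sup>2) * (\<Sum>x\<in>S. (sqrt (p x) * b x)\<^sup>2)"
    by (rule Cauchy_Schwarz_ineq_sum)
  moreover have "(\<Sum>x\<in>S. (sqrt (p x) * a x) * (sqrt (p x) * b x)) = (\<Sum>x\<in>S. p x * a x * b x)"
    by (rule sum.cong) (use assms in \<open>auto simp: algebra_simps\<close>)
  moreover have "\<And>c. (\<Sum>x\<in>S. (sqrt (p x) * c x)\<^sup>2) = (\<Sum>x\<in>S. p x * (c x)\<^sup>2)"
    by (rule sum.cong) (use assms in \<open>auto simp: power_mult_distrib\<close>)
  ultimately show ?thesis by simp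
qed

lemma var_le:
  fixes p x :: "'a \<Rightarrow> real"
  assumes "finite S" "\<forall>s\<in>S. p s \<ge> 0" "(\<Sum>s\<in>S. p s) = 1"
  shows "(\<Sum>s\<in>S. p s * (x s - (\<Sum>t\<in>S. p t * x t))\<^sup>2) \<le> (\<Sum>s\<in>S. p s * (x s - q)\<^sup>2)"
proof -
  define m where "m = (\<Sum>t\<in>S. p t * x t)"
  have "(\<Sum>s\<in>S. p s * (x s - q)\<^sup>2) = (\<Sum>s\<in>S. p s * (x s - m)\<^sup>2 + 2 * (m - q) * (p s * x s) - 2 * (m - q) * m * p s + (m - q)\<^sup>2 * p s)"
    by (rule sum.cong) (auto simp: power2_eq_square algebra_simps)
  also have "\<dots> = (\<Sum>s\<in>S. p s * (x s - m)\<^sup>2) + 2 * (m - q) * m - 2 * (m - q) * m + (m - q)\<^sup>2"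
    by (simp add: sum.distrib sum_subtractf sum_distrib_left[symmetric] assms(3) m_def)
  finally show ?thesis by (simp add: m_def)
qed

lemma pointwise:
  fixes S :: "(nat \<Rightarrow> real) set" and p V W :: "(nat \<Rightarrow> real) \<Rightarrow> real" and N :: nat
  assumes S: "finite S" and p0: "\<forall>s\<in>S. p s \<ge> 0" and p1: "(\<Sum>s\<in>S. p s) = 1" and N: "N > 0"
  shows "\<bar>\<Sum>j<N. (\<Sum>\<sigma>\<in>S. (\<sigma> j - (\<Sum>\<tau>\<in>S. \<tau> j * p \<tau>)) * V \<sigma> * p \<sigma>) * (\<Sum>\<sigma>\<in>S. W \<sigma> * \<sigma> j * p \<sigma>)\<bar>
     \<le> real N * sqrt ((\<Sum>\<sigma>\<in>S. (V \<sigma>)\<^sup>2 * p \<sigma>) * (\<Sum>\<sigma>\<in>S. (W \<sigma>)\<^sup>2 * p \<sigma>))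
        * sqrt (sqrt (\<Sum>\<sigma>1\<in>S. \<Sum>\<sigma>2\<in>S. ((\<Sum>i<N. \<sigma>1 i * \<sigma>2 i) / real N - q) ^ 4 * p \<sigma>1 * p \<sigma>2))"
proof -
  define m where "m j = (\<Sum>\<tau>\<in>S. \<tau> j * p \<tau>)" for j
  define D where "D \<sigma> \<tau> = (\<Sum>j<N. (\<sigma> j - m j) * \<tau> j)" for \<sigma> \<tau> :: "nat \<Rightarrow> real"
  define R where "R \<sigma> \<tau> = (\<Sum>i<N. \<sigma> i * \<tau> i) / real N" for \<sigma> \<tau> :: "nat \<Rightarrow> real"
  define P where "P z = p (fst z) * p (snd z)" for z
  define I where "I = S \<times> S"
  let ?T = "\<Sum>j<N. (\<Sum>\<sigma>\<in>S. (\<sigma> j - (\<Sum>\<tau>\<in>S. \<tau> j * p \<tau>)) * V \<sigma> * p \<sigma>) * (\<Sum>\<sigma>\<in>S. W \<sigma> * \<sigma> j * p \<sigma>)"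
  let ?Y = "\<Sum>\<sigma>1\<in>S. \<Sum>\<sigma>2\<in>S. ((\<Sum>i<N. \<sigma>1 i * \<sigma>2 i) / real N - q) ^ 4 * p \<sigma>1 * p \<sigma>2"
  have fI: "finite I" using S by (simp add: I_def)
  have P0: "\<forall>z\<in>I. P z \<ge> 0" using p0 by (auto simp: P_def I_def)
  have dbl: "\<And>f. (\<Sum>\<sigma>\<in>S. \<Sum>\<tau>\<in>S. f \<sigma> \<tau>) = (\<Sum>z\<in>I. f (fst z) (snd z))"
    by (simp add: I_def sum.cartesian_product case_prod_beta)
  have P1: "(\<Sum>z\<in>I. P z) = 1"
    using dbl[of "\<lambda>\<sigma> \<tau>. p \<sigma> * p \<tau>"] p1 by (simp add: P_def sum_product[symmetric])
  have T1: "?T = (\<Sum>j<N. \<Sum>\<sigma>\<in>S. \<Sum>\<tau>\<in>S. p \<sigma> * p \<tau> * (V \<sigma> * W \<tau>) * ((\<sigma> j - m j) * \<tau> j))"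
    by (rule sum.cong) (auto simp: m_def sum_product intro!: sum.cong)
  also have "\<dots> = (\<Sum>\<sigma>\<in>S. \<Sum>\<tau>\<in>S. \<Sum>j<N. p \<sigma> * p \<tau> * (V \<sigma> * W \<tau>) * ((\<sigma> j - m j) * \<tau> j))"
    by (subst sum.swap) (auto intro!: sum.cong simp: sum.swap[of _ "{..<N}"])
  also have "\<dots> = (\<Sum>\<sigma>\<in>S. \<Sum>\<tau>\<in>S. p \<sigma> * p \<tau> * (V \<sigma> * W \<tau>) * D \<sigma> \<tau>)"
    by (simp add: D_def sum_distrib_left)
  also have "\<dots> = (\<Sum>z\<in>I. P z * (V (fst z) * W (snd z)) * D (fst z) (snd z))"
    by (simp add: dbl P_def)
  finally have Teq: "?T = \<dots>" .
  have CS: "?T\<^sup>2 \<le> (\<Sum>z\<in>I. P z * (V (fst z) * W (snd z))\<^sup>2) * (\<Sum>z\<in>I. P z * (D (fst z) (snd z))\<^sup>2)"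
    unfolding Teq by (rule wcs[OF fI P0])
  have A: "(\<Sum>z\<in>I. P z * (V (fst z) * W (snd z))\<^sup>2) = (\<Sum>\<sigma>\<in>S. (V \<sigma>)\<^sup>2 * p \<sigma>) * (\<Sum>\<sigma>\<in>S. (W \<sigma>)\<^sup>2 * p \<sigma>)"
  proof -
    have "(\<Sum>z\<in>I. P z * (V (fst z) * W (snd z))\<^sup>2) = (\<Sum>\<sigma>\<in>S. \<Sum>\<tau>\<in>S. ((V \<sigma>)\<^sup>2 * p \<sigma>) * ((W \<tau>)\<^sup>2 * p \<tau>))"
      by (simp add: dbl P_def power_mult_distrib mult_ac)
    thus ?thesis by (simp add: sum_product)
  qed
  have Dle: "(\<Sum>\<sigma>\<in>S. p \<sigma> * (D \<sigma> \<tau>)\<^sup>2) \<le> (real N)\<^sup>2 * (\<Sum>\<sigma>\<in>S. p \<sigma> * (R \<sigma> \<tau> - q)\<^sup>2)" for \<tau>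
  proof -
    have xbar: "(\<Sum>\<rho>\<in>S. p \<rho> * R \<rho> \<tau>) = (\<Sum>j<N. m j * \<tau> j) / real N"
      by (simp add: R_def m_def sum_divide_distrib[symmetric] sum_distrib_left sum_distrib_right mult_ac
          flip: sum_divide_distrib) (subst sum.swap, simp add: sum_distrib_right mult_ac)
    have "D \<sigma> \<tau> = real N * (R \<sigma> \<tau> - (\<Sum>\<rho>\<in>S. p \<rho> * R \<rho> \<tau>))" for \<sigma>
    proof -
      have "D \<sigma> \<tau> = (\<Sum>j<N. \<sigma> j * \<tau> j) - (\<Sum>j<N. m j * \<tau> j)"
        by (simp add: D_def algebra_simps sum_subtractf)
      thus ?thesis unfolding xbar using N by (simp add: R_def right_diff_distrib)
    qed
    hence "(\<Sum>\<sigma>\<in>S. p \<sigma> * (D \<sigma> \<tau>)\<^sup>2) = (real N)\<^sup>2 * (\<Sum>\<sigma>\<in>S. p \<sigma> * (R \<sigma> \<tau> - (\<Sum>\<rho>\<in>S. p \<rho> * R \<rho> \<tau>))\<^sup>2)"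
      by (simp add: sum_distrib_left power_mult_distrib mult_ac)
    also have "\<dots> \<le> (real N)\<^sup>2 * (\<Sum>\<sigma>\<in>S. p \<sigma> * (R \<sigma> \<tau> - q)\<^sup>2)"
      by (rule mult_left_mono[OF var_le[OF S p0 p1]]) simp
    finally show ?thesis .
  qed
  define Y2 where "Y2 = (\<Sum>z\<in>I. P z * (R (fst z) (snd z) - q)\<^sup>2)"
  have B: "(\<Sum>z\<in>I. P z * (D (fst z) (snd z))\<^sup>2) \<le> (real N)\<^sup>2 * Y2"
  proof -
    have "(\<Sum>z\<in>I. P z * (D (fst z) (snd z))\<^sup>2) = (\<Sum>\<sigma>\<in>S. \<Sum>\<tau>\<in>S. p \<tau> * (p \<sigma> * (D \<sigma> \<tau>)\<^sup>2))"
      by (simp add: dbl P_def mult_ac)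
    also have "\<dots> = (\<Sum>\<tau>\<in>S. p \<tau> * (\<Sum>\<sigma>\<in>S. p \<sigma> * (D \<sigma> \<tau>)\<^sup>2))"
      by (subst sum.swap) (simp add: sum_distrib_left)
    also have "\<dots> \<le> (\<Sum>\<tau>\<in>S. p \<tau> * ((real N)\<^sup>2 * (\<Sum>\<sigma>\<in>S. p \<sigma> * (R \<sigma> \<tau> - q)\<^sup>2)))"
      by (rule sum_mono, rule mult_left_mono[OF Dle]) (use p0 in auto)
    also have "\<dots> = (real N)\<^sup>2 * (\<Sum>\<tau>\<in>S. \<Sum>\<sigma>\<in>S. p \<tau> * (p \<sigma> * (R \<sigma> \<tau> - q)\<^sup>2))"
      by (simp add: sum_distrib_left mult_ac)
    also have "\<dots> = (real N)\<^sup>2 * Y2"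
      by (subst sum.swap) (simp add: Y2_def dbl P_def mult_ac)
    finally show ?thesis .
  qed
  have Y2ge: "Y2 \<ge> 0" unfolding Y2_def using P0 by (intro sum_nonneg) auto
  have "Y2\<^sup>2 \<le> (\<Sum>z\<in>I. P z * ((R (fst z) (snd z) - q)\<^sup>2)\<^sup>2) * (\<Sum>z\<in>I. P z * 1\<^sup>2)"
    using wcs[OF fI P0, of "\<lambda>z. (R (fst z) (snd z) - q)\<^sup>2" "\<lambda>_. 1"] by (simp add: Y2_def)
  also have "\<dots> = (\<Sum>z\<in>I. P z * (R (fst z) (snd z) - q) ^ 4)"
    using P1 by (simp flip: power_mult)
  also have "\<dots> = ?Y"
    by (simp add: dbl R_def P_def mult_ac)
  finally have "Y2\<^sup>2 \<le> ?Y" .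
  hence Y2le: "Y2 \<le> sqrt ?Y" using Y2ge real_le_rsqrt by blast
  define AA where "AA = (\<Sum>\<sigma>\<in>S. (V \<sigma>)\<^sup>2 * p \<sigma>) * (\<Sum>\<sigma>\<in>S. (W \<sigma>)\<^sup>2 * p \<sigma>)"
  have AA0: "AA \<ge> 0" unfolding AA_def using p0 by (intro mult_nonneg_nonneg sum_nonneg) auto
  have "?T\<^sup>2 \<le> AA * ((real N)\<^sup>2 * sqrt ?Y)"
    using CS A B Y2le AA0
    by (smt (verit, ccfv_SIG) AA_def mult_left_mono of_nat_0_le_iff zero_le_power)
  hence "sqrt (?T\<^sup>2) \<le> sqrt (AA * ((real N)\<^sup>2 * sqrt ?Y))" by (rule real_sqrt_le_mono)
  thus ?thesis by (simp add: real_sqrt_mult AA_def mult_ac)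
qed

lemma amgm_opt:
  fixes X A B :: real
  assumes A: "A \<ge> 0" and B: "B \<ge> 0" and H: "\<And>t. t > 0 \<Longrightarrow> X \<le> (t * A + B / t) / 2"
  shows "X \<le> sqrt A * sqrt B"
proof (cases "A > 0 \<and> B > 0")
  case True
  define t where "t = sqrt B / sqrt A"
  have t: "t > 0" using True by (simp add: t_def)
  have "t * A = sqrt A * sqrt B" using True
    by (simp add: t_def field_simps)
  moreover have "B / t = sqrt A * sqrt B" using True
    by (simp add: t_def field_simps)
  ultimately show ?thesis using H[OF t] by simp
next
  case False
  hence z: "A = 0 \<or> B = 0" using A B by auto
  have "X \<le> 0 + e" if e: "e > 0" for e
  proof (cases "A = 0")
    case True
    have "X \<le> ((B + 1) / e * A + B / ((B + 1) / e)) / 2" using H[of "(B+1)/e"] e B by simp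
    also have "\<dots> = B * e / (2 * (B + 1))" using True e B by (simp add: field_simps)
    also have "\<dots> \<le> e" using e B by (simp add: field_simps)
    finally show ?thesis by simp
  next
    case False
    hence B0: "B = 0" using z by simp
    have "X \<le> (e / (A + 1) * A + B / (e / (A + 1))) / 2" using H[of "e/(A+1)"] e A by simp
    also have "\<dots> = e * A / (2 * (A + 1))" using B0 by simp
    also have "\<dots> \<le> e" using e A by (simp add: field_simps)
    finally show ?thesis by simp
  qed
  hence "X \<le> 0" by (rule field_le_epsilon)
  thus ?thesis using z by auto
qed

lemma cs_int:
  fixes f g :: "'a \<Rightarrow> real"
  assumes [measurable]: "f \<in> borel_measurable M" "g \<in> borel_measurable M"
    and If: "integrable M (\<lambda>x. (f x)\<^sup>2)" and Ig: "integrable M (\<lambda>x. (g x)\<^sup>2)"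
  shows "integrable M (\<lambda>x. f x * g x)"
    and "(\<integral>x. f x * g x \<partial>M) \<le> sqrt (\<integral>x. (f x)\<^sup>2 \<partial>M) * sqrt (\<integral>x. (g x)\<^sup>2 \<partial>M)"
proof -
  have pt: "a * b \<le> (t * a\<^sup>2 + b\<^sup>2 / t) / 2" if "t > 0" for a b t :: real
  proof -
    have "0 \<le> (t * a - b)\<^sup>2 / t" using that by simp
    also have "\<dots> = t * a\<^sup>2 + b\<^sup>2 / t - 2 * a * b" using that by (simp add: power2_eq_square field_simps)
    finally show ?thesis by simp
  qed
  show I: "integrable M (\<lambda>x. f x * g x)"
  proof (rule Bochner_Integration.integrable_bound[OF Bochner_Integration.integrable_add[OF If Ig]])
    show "AE x in M. norm (f x * g x) \<le> norm ((f x)\<^sup>2 + (g x)\<^sup>2)"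
    proof (rule AE_I2)
      fix x
      have "\<bar>f x\<bar> * \<bar>g x\<bar> \<le> (1 * \<bar>f x\<bar>\<^sup>2 + \<bar>g x\<bar>\<^sup>2 / 1) / 2" by (rule pt) simp
      thus "norm (f x * g x) \<le> norm ((f x)\<^sup>2 + (g x)\<^sup>2)" by (simp add: abs_mult) (smt (verit) abs_ge_zero mult_nonneg_nonneg)
    qed
  qed simp
  show "(\<integral>x. f x * g x \<partial>M) \<le> sqrt (\<integral>x. (f x)\<^sup>2 \<partial>M) * sqrt (\<integral>x. (g x)\<^sup>2 \<partial>M)"
  proof (rule amgm_opt)
    show "0 \<le> (\<integral>x. (f x)\<^sup>2 \<partial>M)" by (rule integral_nonneg_AE) simp
    show "0 \<le> (\<integral>x. (g x)\<^sup>2 \<partial>M)" by (rule integral_nonneg_AE) simp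
    fix t :: real assume t: "t > 0"
    have "(\<integral>x. f x * g x \<partial>M) \<le> (\<integral>x. (t * (f x)\<^sup>2 + (g x)\<^sup>2 / t) / 2 \<partial>M)"
      by (rule integral_mono[OF I]) (use If Ig pt t in auto)
    also have "\<dots> = (t * (\<integral>x. (f x)\<^sup>2 \<partial>M) + (\<integral>x. (g x)\<^sup>2 \<partial>M) / t) / 2"
      using If Ig by simp
    finally show "(\<integral>x. f x * g x \<partial>M) \<le> (t * (\<integral>x. (f x)\<^sup>2 \<partial>M) + (\<integral>x. (g x)\<^sup>2 \<partial>M) / t) / 2" .
  qed
qed

lemma spins_eq: "spins N = {f. \<forall>x. (x \<in> {..<N} \<longrightarrow> f x \<in> {1, -1}) \<and> (x \<notin> {..<N} \<longrightarrow> f x = 0)}"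
  unfolding spins_def by (auto simp: not_less)
lemma finite_spins: "finite (spins N)"
  unfolding spins_eq by (rule finite_set_of_finite_funs) simp_all

lemma prob_disorder: "prob_space (disorder N)"
  unfolding disorder_def by (rule prob_space_PiM) (simp add: prob_space_normal_density)

lemma spins_ne: "(\<lambda>i. if i < N then 1 else 0) \<in> spins N"
  unfolding spins_def by auto

lemma spin_abs: "\<sigma> \<in> spins N \<Longrightarrow> \<bar>\<sigma> i\<bar> \<le> 1"
  unfolding spins_def by (cases "i < N") auto

lemma Z_pos: "partition_fn \<beta> h N g > 0"
  unfolding partition_fn_def using finite_spins spins_ne
  by (intro sum_pos) auto

lemma gibbs_pos: "gibbs \<beta> h N g \<sigma> > 0"
  unfolding gibbs_def using Z_pos by simp

lemma gibbs_sum: "(\<Sum>\<sigma>\<in>spins N. gibbs \<beta> h N g \<sigma>) = 1"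
  unfolding gibbs_def using Z_pos[of \<beta> h N g]
  by (simp add: sum_divide_distrib[symmetric] partition_fn_def)

lemma meas_comp: "z \<in> pairs N \<Longrightarrow> (\<lambda>g. g z) \<in> borel_measurable (disorder N)"
  unfolding disorder_def by measurable
lemma meas_hamil[measurable]: "(\<lambda>g. hamil \<beta> h N g \<sigma>) \<in> borel_measurable (disorder N)"
proof -
  have "(\<lambda>g. \<Sum>z\<in>pairs N. g z * \<sigma> (fst z) * \<sigma> (snd z)) \<in> borel_measurable (disorder N)"
    by (rule borel_measurable_sum) (intro borel_measurable_times meas_comp, auto)
  moreover have "(\<lambda>g. \<Sum>(i, j)\<in>pairs N. g (i, j) * \<sigma> i * \<sigma> j) = (\<lambda>g. \<Sum>z\<in>pairs N. g z * \<sigma> (fst z) * \<sigma> (snd z))"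
    by (simp add: case_prod_beta)
  ultimately show ?thesis unfolding hamil_def by (intro borel_measurable_add borel_measurable_times borel_measurable_const) simp_all
qed

lemma meas_exp_hamil[measurable]: "(\<lambda>g. exp (hamil \<beta> h N g \<sigma>)) \<in> borel_measurable (disorder N)"
  by (rule measurable_compose[OF meas_hamil borel_measurable_exp])

lemma meas_Z[measurable]: "(\<lambda>g. partition_fn \<beta> h N g) \<in> borel_measurable (disorder N)"
  unfolding partition_fn_def by (intro borel_measurable_sum meas_exp_hamil)

lemma meas_gibbs[measurable]: "(\<lambda>g. gibbs \<beta> h N g \<sigma>) \<in> borel_measurable (disorder N)"
  unfolding gibbs_def by (intro borel_measurable_divide meas_exp_hamil meas_Z)

lemma meas_gavg:
  assumes "\<And>\<sigma>. \<sigma> \<in> spins N \<Longrightarrow> (\<lambda>g. F g \<sigma>) \<in> borel_measurable (disorder N)"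
  shows "(\<lambda>g. gavg \<beta> h N g (F g)) \<in> borel_measurable (disorder N)"
  unfolding gavg_def using assms by (intro borel_measurable_sum borel_measurable_times) auto

lemma meas_gavg2:
  assumes "\<And>\<sigma>1 \<sigma>2. (\<lambda>g. F \<sigma>1 \<sigma>2) \<in> borel_measurable (disorder N)"
  shows "(\<lambda>g. gavg2 \<beta> h N g F) \<in> borel_measurable (disorder N)"
  unfolding gavg2_def by (intro borel_measurable_sum borel_measurable_times meas_gibbs borel_measurable_const)



lemma overlap_abs: "\<sigma>1 \<in> spins N \<Longrightarrow> \<sigma>2 \<in> spins N \<Longrightarrow> \<bar>overlap N \<sigma>1 \<sigma>2\<bar> \<le> 1"
proof -
  assume s: "\<sigma>1 \<in> spins N" "\<sigma>2 \<in> spins N"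
  have "\<bar>\<Sum>i<N. \<sigma>1 i * \<sigma>2 i\<bar> \<le> (\<Sum>i<N. \<bar>\<sigma>1 i * \<sigma>2 i\<bar>)" by (rule sum_abs)
  also have "\<dots> \<le> (\<Sum>i<N. 1)"
    by (rule sum_mono) (simp add: abs_mult, rule mult_le_one, use spin_abs s in auto)
  finally have "\<bar>\<Sum>i<N. \<sigma>1 i * \<sigma>2 i\<bar> \<le> real N" by simp
  thus ?thesis unfolding overlap_def
    by (cases "N = 0") (auto simp: divide_le_eq_1)
qed

lemma Y_bounds:
  shows "0 \<le> gavg2 \<beta> h N g (\<lambda>\<sigma>1 \<sigma>2. (overlap N \<sigma>1 \<sigma>2 - q) ^ 4)"
    and "gavg2 \<beta> h N g (\<lambda>\<sigma>1 \<sigma>2. (overlap N \<sigma>1 \<sigma>2 - q) ^ 4) \<le> (1 + \<bar>q\<bar>) ^ 4"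
proof -
  show "0 \<le> gavg2 \<beta> h N g (\<lambda>\<sigma>1 \<sigma>2. (overlap N \<sigma>1 \<sigma>2 - q) ^ 4)"
    unfolding gavg2_def using gibbs_pos
    by (intro sum_nonneg mult_nonneg_nonneg) (auto intro: less_imp_le simp: zero_le_even_power)
  have "gavg2 \<beta> h N g (\<lambda>\<sigma>1 \<sigma>2. (overlap N \<sigma>1 \<sigma>2 - q) ^ 4)
      \<le> (\<Sum>\<sigma>1\<in>spins N. \<Sum>\<sigma>2\<in>spins N. (1 + \<bar>q\<bar>) ^ 4 * gibbs \<beta> h N g \<sigma>1 * gibbs \<beta> h N g \<sigma>2)"
    unfolding gavg2_def
  proof (intro sum_mono mult_right_mono)
    fix \<sigma>1 \<sigma>2 assume s: "\<sigma>1 \<in> spins N" "\<sigma>2 \<in> spins N"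
    have "\<bar>overlap N \<sigma>1 \<sigma>2 - q\<bar> \<le> 1 + \<bar>q\<bar>" using overlap_abs[OF s] by linarith
    hence "\<bar>overlap N \<sigma>1 \<sigma>2 - q\<bar> ^ 4 \<le> (1 + \<bar>q\<bar>) ^ 4" by (rule power_mono) simp
    thus "(overlap N \<sigma>1 \<sigma>2 - q) ^ 4 \<le> (1 + \<bar>q\<bar>) ^ 4" by (simp add: power_even_abs)
  qed (use gibbs_pos in \<open>auto intro: less_imp_le\<close>)
  also have "\<dots> = (1 + \<bar>q\<bar>) ^ 4"
    by (simp add: mult.assoc sum_distrib_left[symmetric] sum_distrib_right[symmetric] gibbs_sum)
  finally show "gavg2 \<beta> h N g (\<lambda>\<sigma>1 \<sigma>2. (overlap N \<sigma>1 \<sigma>2 - q) ^ 4) \<le> (1 + \<bar>q\<bar>) ^ 4" .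
qed

lemma gavg_sq_nonneg: "0 \<le> gavg \<beta> h N g (\<lambda>\<sigma>. (F \<sigma>)\<^sup>2)"
  unfolding gavg_def using gibbs_pos by (intro sum_nonneg mult_nonneg_nonneg) (auto intro: less_imp_le)



theorem lemma3p1:
  fixes \<beta> h :: real
  assumes "\<beta> > 0"
    and "\<exists>q C0. \<forall>N::nat. N \<ge> 1 \<longrightarrow>
           (\<integral>g. gavg2 \<beta> h N g (\<lambda>\<sigma>1 \<sigma>2. (overlap N \<sigma>1 \<sigma>2 - q) ^ 4) \<partial>disorder N)
             \<le> C0 / (real N) ^ 2"
  shows "\<exists>C. \<forall>N::nat. \<forall>(v :: nat \<Rightarrow> (nat \<times> nat \<Rightarrow> real) \<Rightarrow> (nat \<Rightarrow> real) \<Rightarrow> real)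
                         (w :: nat \<Rightarrow> (nat \<times> nat \<Rightarrow> real) \<Rightarrow> (nat \<Rightarrow> real) \<Rightarrow> real).
     N \<ge> 1
     \<longrightarrow> (\<forall>k<N. \<forall>\<sigma>\<in>spins N. (\<lambda>g. v k g \<sigma>) \<in> borel_measurable (disorder N)
                          \<and> (\<lambda>g. w k g \<sigma>) \<in> borel_measurable (disorder N))
     \<longrightarrow> (\<forall>k<N. integrable (disorder N)
            (\<lambda>g. gavg \<beta> h N g (\<lambda>\<sigma>. (v k g \<sigma>)\<^sup>2) * gavg \<beta> h N g (\<lambda>\<sigma>. (w k g \<sigma>)\<^sup>2)))
     \<longrightarrow> (\<integral>g. (1 / (real N)\<^sup>2) *
             (\<Sum>j<N. \<Sum>k<N. gavg \<beta> h N g (\<lambda>\<sigma>. sdot \<beta> h N g j \<sigma> * v k g \<sigma>)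
                           * gavg \<beta> h N g (\<lambda>\<sigma>. w k g \<sigma> * \<sigma> j)) \<partial>disorder N)
         \<le> C / (real N) powr (3/2) *
            (\<Sum>k<N. sqrt (\<integral>g. gavg \<beta> h N g (\<lambda>\<sigma>. (v k g \<sigma>)\<^sup>2)
                               * gavg \<beta> h N g (\<lambda>\<sigma>. (w k g \<sigma>)\<^sup>2) \<partial>disorder N))"
proof -
  obtain q C0 where H: "\<forall>N::nat. N \<ge> 1 \<longrightarrow>
           (\<integral>g. gavg2 \<beta> h N g (\<lambda>\<sigma>1 \<sigma>2. (overlap N \<sigma>1 \<sigma>2 - q) ^ 4) \<partial>disorder N)
             \<le> C0 / (real N) ^ 2" using assms(2) by blast
  define Y where "Y N g = gavg2 \<beta> h N g (\<lambda>\<sigma>1 \<sigma>2. (overlap N \<sigma>1 \<sigma>2 - q) ^ 4)" for N g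
  have Y0: "0 \<le> Y N g" for N g unfolding Y_def by (rule Y_bounds(1))
  have Yb: "Y N g \<le> (1 + \<bar>q\<bar>) ^ 4" for N g unfolding Y_def by (rule Y_bounds(2))
  have Ym: "Y N \<in> borel_measurable (disorder N)" for N
    unfolding Y_def by (rule meas_gavg2) simp
  have C00: "0 \<le> C0"
  proof -
    have "0 \<le> (\<integral>g. Y 1 g \<partial>disorder 1)" by (rule integral_nonneg_AE) (simp add: Y0)
    also have "\<dots> \<le> C0" using H[rule_format, of 1] by (simp add: Y_def)
    finally show ?thesis .
  qed
  show ?thesis
  proof (intro exI[of _ "sqrt (sqrt C0)"] allI impI)
    fix N :: nat and v w :: "nat \<Rightarrow> (nat \<times> nat \<Rightarrow> real) \<Rightarrow> (nat \<Rightarrow> real) \<Rightarrow> real"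
    assume N1: "N \<ge> 1"
      and vm: "\<forall>k<N. \<forall>\<sigma>\<in>spins N. (\<lambda>g. v k g \<sigma>) \<in> borel_measurable (disorder N)
                          \<and> (\<lambda>g. w k g \<sigma>) \<in> borel_measurable (disorder N)"
      and PI: "\<forall>k<N. integrable (disorder N)
            (\<lambda>g. gavg \<beta> h N g (\<lambda>\<sigma>. (v k g \<sigma>)\<^sup>2) * gavg \<beta> h N g (\<lambda>\<sigma>. (w k g \<sigma>)\<^sup>2))"
    interpret prob_space "disorder N" by (rule prob_disorder)
    let ?M = "disorder N"
    let ?C = "sqrt (sqrt C0)"
    have N0: "N > 0" using N1 by simp
    define P where "P k g = gavg \<beta> h N g (\<lambda>\<sigma>. (v k g \<sigma>)\<^sup>2) * gavg \<beta> h N g (\<lambda>\<sigma>. (w k g \<sigma>)\<^sup>2)" for k g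
    define b where "b g = sqrt (sqrt (Y N g))" for g
    have P0: "0 \<le> P k g" for k g unfolding P_def by (intro mult_nonneg_nonneg gavg_sq_nonneg)
    have Pm: "P k \<in> borel_measurable ?M" if k: "k < N" for k
      unfolding P_def using vm k
      by (intro borel_measurable_times meas_gavg borel_measurable_power) auto
    have PIk: "integrable ?M (P k)" if "k < N" for k using PI that by (simp add: P_def[abs_def])
    have bm: "b \<in> borel_measurable ?M" unfolding b_def using Ym by measurable
    have sYm: "(\<lambda>g. sqrt (Y N g)) \<in> borel_measurable ?M" using Ym by measurable
    have YI: "integrable ?M (Y N)"
      by (rule integrable_const_bound[where B="(1 + \<bar>q\<bar>) ^ 4"]) (use Y0 Yb Ym in auto)
    have sYI: "integrable ?M (\<lambda>g. sqrt (Y N g))"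
      by (rule integrable_const_bound[where B="sqrt ((1 + \<bar>q\<bar>) ^ 4)"]) (use Y0 Yb sYm in auto)
    have EY: "(\<integral>g. Y N g \<partial>?M) \<le> C0 / (real N)\<^sup>2" using H N1 by (simp add: Y_def)
    have EsY: "(\<integral>g. sqrt (Y N g) \<partial>?M) \<le> sqrt (\<integral>g. Y N g \<partial>?M)"
      using cs_int(2)[OF sYm borel_measurable_const, of 1] YI Y0 by (simp add: prob_space)
    also have "\<dots> \<le> sqrt (C0 / (real N)\<^sup>2)" using EY by simp
    also have "\<dots> = sqrt C0 / real N" by (simp add: real_sqrt_divide)
    finally have "sqrt (\<integral>g. sqrt (Y N g) \<partial>?M) \<le> sqrt (sqrt C0 / real N)"
      by (rule real_sqrt_le_mono)
    hence EsY2: "sqrt (\<integral>g. sqrt (Y N g) \<partial>?M) \<le> ?C / sqrt (real N)"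
      by (simp add: real_sqrt_divide)
    have key: "integrable ?M (\<lambda>g. sqrt (P k g) * b g) \<and>
       (\<integral>g. sqrt (P k g) * b g \<partial>?M) \<le> sqrt (\<integral>g. P k g \<partial>?M) * (?C / sqrt (real N))" if k: "k < N" for k
    proof -
      have m1: "(\<lambda>g. sqrt (P k g)) \<in> borel_measurable ?M" using Pm[OF k] by measurable
      have e1: "(\<lambda>g. (sqrt (P k g))\<^sup>2) = P k" using P0 by (simp add: fun_eq_iff)
      have e2: "(\<lambda>g. (b g)\<^sup>2) = (\<lambda>g. sqrt (Y N g))" using Y0 by (simp add: fun_eq_iff b_def)
      note c = cs_int[OF m1 bm, unfolded e1 e2, OF PIk[OF k] sYI]
      have "sqrt (\<integral>g. P k g \<partial>?M) * sqrt (\<integral>g. sqrt (Y N g) \<partial>?M) \<le> sqrt (\<integral>g. P k g \<partial>?M) * (?C / sqrt (real N))"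
        by (rule mult_left_mono[OF EsY2]) (simp add: P0 integral_nonneg_AE)
      with c show ?thesis by simp
    qed
    define F where "F g = (1 / (real N)\<^sup>2) *
             (\<Sum>j<N. \<Sum>k<N. gavg \<beta> h N g (\<lambda>\<sigma>. sdot \<beta> h N g j \<sigma> * v k g \<sigma>)
                           * gavg \<beta> h N g (\<lambda>\<sigma>. w k g \<sigma> * \<sigma> j))" for g
    define Bd where "Bd g = (1 / real N) * (\<Sum>k<N. sqrt (P k g) * b g)" for g
    have pw: "\<bar>\<Sum>j<N. gavg \<beta> h N g (\<lambda>\<sigma>. sdot \<beta> h N g j \<sigma> * v k g \<sigma>) * gavg \<beta> h N g (\<lambda>\<sigma>. w k g \<sigma> * \<sigma> j)\<bar>
       \<le> real N * sqrt (P k g) * b g" for k g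
      unfolding P_def b_def Y_def sdot_def gavg_def gavg2_def overlap_def
      by (rule pointwise[OF finite_spins _ gibbs_sum N0]) (use gibbs_pos in \<open>auto intro: less_imp_le\<close>)
    have FB: "F g \<le> Bd g" for g
    proof -
      have "F g = (1 / (real N)\<^sup>2) * (\<Sum>k<N. \<Sum>j<N. gavg \<beta> h N g (\<lambda>\<sigma>. sdot \<beta> h N g j \<sigma> * v k g \<sigma>)
                           * gavg \<beta> h N g (\<lambda>\<sigma>. w k g \<sigma> * \<sigma> j))"
        unfolding F_def by (subst sum.swap) simp
      also have "\<dots> \<le> (1 / (real N)\<^sup>2) * (\<Sum>k<N. real N * sqrt (P k g) * b g)"
        by (intro mult_left_mono sum_mono order_trans[OF abs_ge_self pw]) simp
      also have "\<dots> = Bd g" using N0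
        by (simp add: Bd_def sum_distrib_left[symmetric] mult.assoc power2_eq_square)
      finally show ?thesis .
    qed
    have BdI: "integrable ?M Bd" unfolding Bd_def
      by (intro Bochner_Integration.integrable_mult_right Bochner_Integration.integrable_sum) (use key in auto)
    have Bd0: "0 \<le> Bd g" for g unfolding Bd_def b_def using P0 Y0
      by (intro mult_nonneg_nonneg sum_nonneg) auto
    have "(\<integral>g. F g \<partial>?M) \<le> (\<integral>g. Bd g \<partial>?M)"
    proof (cases "integrable ?M F")
      case True thus ?thesis by (rule integral_mono[OF _ BdI]) (rule FB)
    next
      case False
      hence "(\<integral>g. F g \<partial>?M) = 0" by (rule not_integrable_integral_eq)
      also have "0 \<le> (\<integral>g. Bd g \<partial>?M)" by (rule integral_nonneg_AE) (simp add: Bd0)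
      finally show ?thesis .
    qed
    also have "(\<integral>g. Bd g \<partial>?M) = (1 / real N) * (\<Sum>k<N. \<integral>g. sqrt (P k g) * b g \<partial>?M)"
      unfolding Bd_def using key by (simp add: integral_sum)
    also have "\<dots> \<le> (1 / real N) * (\<Sum>k<N. sqrt (\<integral>g. P k g \<partial>?M) * (?C / sqrt (real N)))"
      by (intro mult_left_mono sum_mono) (use key in auto)
    also have "\<dots> = ?C / (real N) powr (3/2) * (\<Sum>k<N. sqrt (\<integral>g. P k g \<partial>?M))"
    proof -
      have "(real N) powr (3/2) = real N * sqrt (real N)"
      proof -
        have "real N powr 1 * real N powr (1/2) = real N powr (1 + 1/2)"
          by (rule powr_add[symmetric])
        hence "(real N) powr (3/2) = real N powr 1 * real N powr (1/2)" by simp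
        thus ?thesis using N0 by (simp add: powr_half_sqrt)
      qed
      thus ?thesis by (simp add: sum_distrib_left sum_distrib_right sum_divide_distrib mult_ac)
    qed
    finally show "(\<integral>g. (1 / (real N)\<^sup>2) *
             (\<Sum>j<N. \<Sum>k<N. gavg \<beta> h N g (\<lambda>\<sigma>. sdot \<beta> h N g j \<sigma> * v k g \<sigma>)
                           * gavg \<beta> h N g (\<lambda>\<sigma>. w k g \<sigma> * \<sigma> j)) \<partial>disorder N)
         \<le> ?C / (real N) powr (3/2) *
            (\<Sum>k<N. sqrt (\<integral>g. gavg \<beta> h N g (\<lambda>\<sigma>. (v k g \<sigma>)\<^sup>2)
                               * gavg \<beta> h N g (\<lambda>\<sigma>. (w k g \<sigma>)\<^sup>2) \<partial>disorder N))"
      unfolding F_def P_def .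
  qed
qed

end
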